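(* Let $G=(V,E)$ be a finite simple graph that is both $P_6$-free and banner-free. If $G$ has an efficient dominating set, then the square $G^2$ is banner-free.
   Context: All graphs are finite, undirected and simple. $P_t$ denotes the path on $t$ vertices. For a family $\mathcal{F}$ of graphs, a graph $G$ is $\mathcal{F}$-free if it contains no induced subgraph isomorphic to a member of $\mathcal{F}$. A banner is the graph obtained from a chordless cycle on four vertices by adding one new vertex adjacent to exactly one vertex of the cycle. An efficient dominating set of $G$ is a subset $D\subseteq V$ that is an independent set such that every vertex of $V\setminus D$ has exactly one neighbor in $D$. For vertices $u,v$, $\mathrm{dist}_G(u,v)$ is the distance between them in $G$. The square of $G=(V,E)$ is the graph $G^2=(V,E^2)$ where $uv\in E^2$ if and only if $\mathrm{dist}_G(u,v)\in\{1,2\}$. *)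

theory Defs
  imports Main "HOL-Library.Extended_Nat"
begin

definition simple_graph :: "'a set \<Rightarrow> ('a \<Rightarrow> 'a \<Rightarrow> bool) \<Rightarrow> bool" where
  "simple_graph V E \<longleftrightarrow> finite V \<and> (\<forall>u v. E u v \<longrightarrow> u \<in> V \<and> v \<in> V)
     \<and> (\<forall>u v. E u v \<longrightarrow> E v u) \<and> (\<forall>v. \<not> E v v)"

definition has_induced :: "'a set \<Rightarrow> ('a \<Rightarrow> 'a \<Rightarrow> bool) \<Rightarrow> 'b set \<Rightarrow> ('b \<Rightarrow> 'b \<Rightarrow> bool) \<Rightarrow> bool" where
  "has_induced V E W F \<longleftrightarrow> (\<exists>f. inj_on f W \<and> f ` W \<subseteq> V \<and>
      (\<forall>x\<in>W. \<forall>y\<in>W. E (f x) (f y) \<longleftrightarrow> F x y))"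

definition path_edges :: "nat \<Rightarrow> nat \<Rightarrow> bool" where
  "path_edges i j \<longleftrightarrow> i + 1 = j \<or> j + 1 = i"

definition P_free :: "nat \<Rightarrow> 'a set \<Rightarrow> ('a \<Rightarrow> 'a \<Rightarrow> bool) \<Rightarrow> bool" where
  "P_free t V E \<longleftrightarrow> \<not> has_induced V E {0..<t} path_edges"

definition banner_edges :: "nat \<Rightarrow> nat \<Rightarrow> bool" where
  "banner_edges i j \<longleftrightarrow> {i, j} \<in> {{0,1}, {1,2}, {2,3}, {3,0}, {0,4}}"

definition banner_free :: "'a set \<Rightarrow> ('a \<Rightarrow> 'a \<Rightarrow> bool) \<Rightarrow> bool" where
  "banner_free V E \<longleftrightarrow> \<not> has_induced V E {0..<5} banner_edges"

definition efficient_dominating_set :: "'a set \<Rightarrow> ('a \<Rightarrow> 'a \<Rightarrow> bool) \<Rightarrow> 'a set \<Rightarrow> bool" where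
  "efficient_dominating_set V E D \<longleftrightarrow> D \<subseteq> V \<and> (\<forall>x\<in>D. \<forall>y\<in>D. \<not> E x y)
     \<and> (\<forall>v\<in>V - D. \<exists>!d. d \<in> D \<and> E v d)"

fun walk_len :: "'a set \<Rightarrow> ('a \<Rightarrow> 'a \<Rightarrow> bool) \<Rightarrow> 'a \<Rightarrow> 'a \<Rightarrow> nat \<Rightarrow> bool" where
  "walk_len V E u v 0 \<longleftrightarrow> u = v \<and> u \<in> V"
| "walk_len V E u v (Suc n) \<longleftrightarrow> (\<exists>w. E u w \<and> walk_len V E w v n)"

definition gdist :: "'a set \<Rightarrow> ('a \<Rightarrow> 'a \<Rightarrow> bool) \<Rightarrow> 'a \<Rightarrow> 'a \<Rightarrow> enat" where
  "gdist V E u v = (if \<exists>n. walk_len V E u v n then enat (LEAST n. walk_len V E u v n) else \<infinity>)"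

definition square_edges :: "'a set \<Rightarrow> ('a \<Rightarrow> 'a \<Rightarrow> bool) \<Rightarrow> 'a \<Rightarrow> 'a \<Rightarrow> bool" where
  "square_edges V E u v \<longleftrightarrow> u \<in> V \<and> v \<in> V \<and> gdist V E u v \<in> {1, 2}"

end

theory Submission
  imports Defs
begin

lemma lt6: "{0..<6::nat} = {0,1,2,3,4,5}" by auto
lemma lt5: "{0..<5::nat} = {0,1,2,3,4}" by auto

lemma banner_vals:
  "banner_edges 0 1" "banner_edges 1 2" "banner_edges 2 3" "banner_edges 3 0" "banner_edges 0 4"
  "\<not> banner_edges 0 2" "\<not> banner_edges 1 3" "\<not> banner_edges 1 4" "\<not> banner_edges 2 4" "\<not> banner_edges 3 4"
  by (auto simp: banner_edges_def doubleton_eq_iff)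

lemma p6_lemma:
  assumes G: "simple_graph V E" and P: "P_free 6 V E"
  and h: "E v0 v1" "E v1 v2" "E v2 v3" "E v3 v4" "E v4 v5"
    "\<not> E v0 v2" "\<not> E v0 v3" "\<not> E v0 v4" "\<not> E v0 v5" "\<not> E v1 v3" "\<not> E v1 v4" "\<not> E v1 v5"
    "\<not> E v2 v4" "\<not> E v2 v5" "\<not> E v3 v5"
  shows False
proof -
  have sym: "\<And>u v. E u v \<Longrightarrow> E v u" and irr: "\<And>u. \<not> E u u" and inV: "\<And>u v. E u v \<Longrightarrow> u \<in> V \<and> v \<in> V"
    using G unfolding simple_graph_def by auto
  define f where "f = (\<lambda>i::nat. [v0,v1,v2,v3,v4,v5] ! i)"
  have f: "f 0 = v0" "f 1 = v1" "f 2 = v2" "f 3 = v3" "f 4 = v4" "f 5 = v5"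
    unfolding f_def by (simp_all add: numeral_eq_Suc)
  have d: "distinct [v0,v1,v2,v3,v4,v5]"
    using h sym irr by (simp; metis)
  have "\<forall>x\<in>{0..<6}. \<forall>y\<in>{0..<6}. f x = f y \<longrightarrow> x = y"
    unfolding lt6 using d f by auto
  then have "inj_on f {0..<6}" unfolding inj_on_def by blast
  moreover have "f ` {0..<6} \<subseteq> V"
    using f inV h(1,3,5) by (auto simp: lt6)
  moreover have "\<forall>x\<in>{0..<6}. \<forall>y\<in>{0..<6}. E (f x) (f y) \<longleftrightarrow> path_edges x y"
    unfolding lt6 path_edges_def using f h sym irr by auto
  ultimately show False using P unfolding P_free_def has_induced_def by blast
qed

lemma ban_lemma:
  assumes G: "simple_graph V E" and B: "banner_free V E"
  and h: "E v0 v1" "E v1 v2" "E v2 v3" "E v3 v0" "E v0 v4" "v0 \<noteq> v2" "v1 \<noteq> v3"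
    "\<not> E v0 v2" "\<not> E v1 v3" "\<not> E v1 v4" "\<not> E v2 v4" "\<not> E v3 v4"
  shows False
proof -
  have sym: "\<And>u v. E u v \<Longrightarrow> E v u" and irr: "\<And>u. \<not> E u u" and inV: "\<And>u v. E u v \<Longrightarrow> u \<in> V \<and> v \<in> V"
    using G unfolding simple_graph_def by auto
  define f where "f = (\<lambda>i::nat. [v0,v1,v2,v3,v4] ! i)"
  have f: "f 0 = v0" "f 1 = v1" "f 2 = v2" "f 3 = v3" "f 4 = v4"
    unfolding f_def by (simp_all add: numeral_eq_Suc)
  have d: "distinct [v0,v1,v2,v3,v4]"
    using h sym irr by (simp; metis)
  have "\<forall>x\<in>{0..<5}. \<forall>y\<in>{0..<5}. f x = f y \<longrightarrow> x = y"
    unfolding lt5 using d f by auto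
  then have "inj_on f {0..<5}" unfolding inj_on_def by blast
  moreover have "f ` {0..<5} \<subseteq> V"
    using f inV h(1,3,5) by (auto simp: lt5)
  moreover have "\<forall>x\<in>{0..<5}. \<forall>y\<in>{0..<5}. E (f x) (f y) \<longleftrightarrow> banner_edges x y"
    unfolding lt5 using f h sym irr by (auto simp: banner_edges_def doubleton_eq_iff)
  ultimately show False using B unfolding banner_free_def has_induced_def by blast
qed

lemma walk1: "simple_graph V E \<Longrightarrow> walk_len V E u v (Suc 0) \<longleftrightarrow> E u v"
  unfolding simple_graph_def by auto
lemma walk2: "simple_graph V E \<Longrightarrow> walk_len V E u v (Suc (Suc 0)) \<longleftrightarrow> (\<exists>w. E u w \<and> E w v)"
  unfolding simple_graph_def by auto

lemma gdist_eq: "gdist V E u v = enat k \<longleftrightarrow> walk_len V E u v k \<and> (\<forall>j<k. \<not> walk_len V E u v j)"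
proof
  assume h: "gdist V E u v = enat k"
  then have ex: "\<exists>n. walk_len V E u v n" unfolding gdist_def by (auto split: if_splits)
  with h have k: "k = (LEAST n. walk_len V E u v n)" unfolding gdist_def by auto
  show "walk_len V E u v k \<and> (\<forall>j<k. \<not> walk_len V E u v j)"
    using k ex by (metis LeastI not_less_Least)
next
  assume h: "walk_len V E u v k \<and> (\<forall>j<k. \<not> walk_len V E u v j)"
  then have "(LEAST n. walk_len V E u v n) = k"
    by (metis Least_equality not_le)
  then show "gdist V E u v = enat k" using h unfolding gdist_def by auto
qed

lemma sq_iff:
  assumes "simple_graph V E"
  shows "square_edges V E u v \<longleftrightarrow> u \<in> V \<and> v \<in> V \<and> u \<noteq> v \<and> (E u v \<or> (\<exists>w. E u w \<and> E w v))"
proof -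
  have "gdist V E u v \<in> {1,2} \<longleftrightarrow> gdist V E u v = enat 1 \<or> gdist V E u v = enat 2"
    by (simp add: one_enat_def numeral_eq_enat)
  also have "\<dots> \<longleftrightarrow> (E u v \<and> \<not> (u = v \<and> u \<in> V)) \<or> ((\<exists>w. E u w \<and> E w v) \<and> \<not> (u = v \<and> u \<in> V) \<and> \<not> E u v)"
    unfolding gdist_eq using walk1[OF assms] walk2[OF assms]
    by (simp add: less_Suc_eq numeral_2_eq_2) blast
  finally show ?thesis unfolding square_edges_def using assms unfolding simple_graph_def by auto
qed

declare [[smt_timeout=600]]
lemma k_all2_1:
  fixes E :: "'a \<Rightarrow> 'a \<Rightarrow> bool" and D :: "'a set"
  assumes sym: "\<And>u v. E u v \<Longrightarrow> E v u" and irr: "\<And>u. \<not> E u u"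
  and p6: "\<And>v0 v1 v2 v3 v4 v5. E v0 v1 \<Longrightarrow> E v1 v2 \<Longrightarrow> E v2 v3 \<Longrightarrow> E v3 v4 \<Longrightarrow> E v4 v5 \<Longrightarrow> \<not> E v0 v2 \<Longrightarrow> \<not> E v0 v3 \<Longrightarrow> \<not> E v0 v4 \<Longrightarrow> \<not> E v0 v5 \<Longrightarrow> \<not> E v1 v3 \<Longrightarrow> \<not> E v1 v4 \<Longrightarrow> \<not> E v1 v5 \<Longrightarrow> \<not> E v2 v4 \<Longrightarrow> \<not> E v2 v5 \<Longrightarrow> \<not> E v3 v5 \<Longrightarrow> False"
  and ban: "\<And>v0 v1 v2 v3 v4. E v0 v1 \<Longrightarrow> E v1 v2 \<Longrightarrow> E v2 v3 \<Longrightarrow> E v3 v0 \<Longrightarrow> E v0 v4 \<Longrightarrow> v0 \<noteq> v2 \<Longrightarrow> v1 \<noteq> v3 \<Longrightarrow> \<not> E v0 v2 \<Longrightarrow> \<not> E v1 v3 \<Longrightarrow> \<not> E v1 v4 \<Longrightarrow> \<not> E v2 v4 \<Longrightarrow> \<not> E v3 v4 \<Longrightarrow> False"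
  and ed1: "\<And>u v. u \<in> D \<Longrightarrow> v \<in> D \<Longrightarrow> \<not> E u v"
  and ed2: "\<And>u v w. u \<in> D \<Longrightarrow> v \<in> D \<Longrightarrow> E u w \<Longrightarrow> E v w \<Longrightarrow> u = v"
  and far_ac: "\<And>s. \<not> (E s a \<and> E s c)" and nf_ac: "\<not> E a c"
  and far_bd: "\<And>s. \<not> (E s b \<and> E s d)" and nf_bd: "\<not> E b d"
  and far_eb: "\<And>s. \<not> (E s e \<and> E s b)" and nf_eb: "\<not> E e b"
  and far_ec: "\<And>s. \<not> (E s e \<and> E s c)" and nf_ec: "\<not> E e c"
  and far_ed: "\<And>s. \<not> (E s e \<and> E s d)" and nf_ed: "\<not> E e d"
  and edges: "E a x" "E x b" "E b y" "E y c" "E c z" "E z d" "E d w" "E w a" "E a e"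
  and cnon: "\<not> E a b" "\<not> E b c" "\<not> E c d" "\<not> E d a"
  and dist5: "distinct [a, b, c, d, e]"
  and dom_b: "db \<in> D" "db = b \<or> E b db"
  and dom_c: "dc \<in> D" "dc = c \<or> E c dc"
  and dom_d: "dd \<in> D" "dd = d \<or> E d dd"
  shows False
proof -
  have fixed: "\<not> E a b \<and> \<not> E a y \<and> \<not> E a c \<and> \<not> E a z \<and> \<not> E a d \<and> \<not> E b c \<and> \<not> E b z \<and> \<not> E b d \<and> \<not> E b w \<and> \<not> E c x \<and> \<not> E c d \<and> \<not> E c w \<and> \<not> E d x \<and> \<not> E d y \<and> a \<noteq> x \<and> a \<noteq> b \<and> a \<noteq> y \<and> a \<noteq> c \<and> a \<noteq> z \<and> a \<noteq> d \<and> a \<noteq> w \<and> a \<noteq> e \<and> x \<noteq> b \<and> x \<noteq> y \<and> x \<noteq> c \<and> x \<noteq> z \<and> x \<noteq> d \<and> x \<noteq> w \<and> x \<noteq> e \<and> b \<noteq> y \<and> b \<noteq> c \<and> b \<noteq> z \<and> b \<noteq> d \<and> b \<noteq> w \<and> b \<noteq> e \<and> y \<noteq> c \<and> y \<noteq> z \<and> y \<noteq> d \<and> y \<noteq> w \<and> y \<noteq> e \<and> c \<noteq> z \<and> c \<noteq> d \<and> c \<noteq> w \<and> c \<noteq> e \<and> z \<noteq> d \<and> z \<noteq> w \<and> z \<noteq> e \<and> d \<noteq> w \<and> d \<noteq> e \<and> w \<noteq> e"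
    using far_ac[of a] far_ac[of x] far_ac[of b] far_ac[of y] far_ac[of c] far_ac[of z] far_ac[of d] far_ac[of w] far_ac[of e] far_bd[of a] far_bd[of x] far_bd[of b] far_bd[of y] far_bd[of c] far_bd[of z] far_bd[of d] far_bd[of w] far_bd[of e] far_eb[of a] far_eb[of x] far_eb[of b] far_eb[of y] far_eb[of c] far_eb[of z] far_eb[of d] far_eb[of w] far_eb[of e] far_ec[of a] far_ec[of x] far_ec[of b] far_ec[of y] far_ec[of c] far_ec[of z] far_ec[of d] far_ec[of w] far_ec[of e] far_ed[of a] far_ed[of x] far_ed[of b] far_ed[of y] far_ed[of c] far_ed[of z] far_ed[of d] far_ed[of w] far_ed[of e] sym irr edges cnon dist5 nf_ac nf_bd nf_eb nf_ec nf_ed by (smt (z3))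
  show False
    using far_ac[of db] far_ac[of dc] far_ac[of dd] far_bd[of db] far_bd[of dc] far_bd[of dd] far_eb[of x] far_eb[of y] far_eb[of db] far_eb[of dc] far_eb[of dd] far_ec[of z] far_ec[of db] far_ec[of dc] far_ec[of dd] far_ed[of w] far_ed[of db] far_ed[of dc] far_ed[of dd] ed2[of x c z] ed1[of x z] ed2[of x db w] ed2[of x dc z] ed2[of x dd z] ed2[of b c y] ed2[of b z x] ed2[of b db y] ed2[of b dc y] ed2[of b dd y] ed1[of y z] ed2[of y d z] ed1[of y w] ed1[of y db] ed2[of y db z] ed2[of y dc z] ed2[of y dd z] ed2[of c d z] ed2[of c w y] ed2[of c db z] ed2[of c dc z] ed2[of c dd z] ed2[of z db y] ed2[of z db c] ed2[of z db d] ed2[of z dc y] ed1[of z dd] ed2[of z dd y] ed2[of z dd w] ed2[of d db z] ed2[of d dc z] ed2[of d dd z] ed2[of w db x] ed2[of w db y] ed2[of w dc z] ed2[of w dd y] ed2[of db dc y] ed2[of db dc z] ed2[of db dc w] ed2[of db dd y] ed2[of db dd z] ed2[of db dd d] ed2[of db dd w] ed2[of dc dd y] ed2[of dc dd z] ed2[of dc dd w] p6[of a x y c z d] p6[of a db d z y b] p6[of a dc b y z d] p6[of a dc d z y b] p6[of a dd b y z d] p6[of b y z w a e] p6[of c y b x a e] p6[of c y b db a e] p6[of c z d w a e] p6[of c z d dd a e] p6[of c db d w a e] p6[of c dc d w a e] p6[of c dd d w a e] p6[of d z y x a e] p6[of e a x y c db] p6[of e a x z c db] p6[of e a x z d db]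 p6[of e a x z d dc] p6[of e a x z d dd] p6[of e a w y b db] p6[of e a w y b dc] p6[of e a w y b dd] p6[of e a w y c dd] p6[of e a w z c dc] p6[of e a w z c dd] ban[of x a w z b] ban[of x y c z a] ban[of x z d db a] ban[of x z d dc b] ban[of y b dc w c] ban[of y b dd w c] ban[of y c dd w b] ban[of y z d dc b] ban[of z x db c d] ban[of z x dd d c] ban[of z y b dc d] ban[of w y b db d] ban[of w y c db a] ban[of w y c dc a] ban[of w y c dd d] ban[of w z c dc a] ban[of w z c dd a]
      sym fixed edges nf_ac nf_bd nf_eb nf_ec nf_ed dom_b dom_c dom_d
    by (smt (z3))
qed

lemma k_all2_2:
  fixes E :: "'a \<Rightarrow> 'a \<Rightarrow> bool" and D :: "'a set"
  assumes sym: "\<And>u v. E u v \<Longrightarrow> E v u" and irr: "\<And>u. \<not> E u u"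
  and p6: "\<And>v0 v1 v2 v3 v4 v5. E v0 v1 \<Longrightarrow> E v1 v2 \<Longrightarrow> E v2 v3 \<Longrightarrow> E v3 v4 \<Longrightarrow> E v4 v5 \<Longrightarrow> \<not> E v0 v2 \<Longrightarrow> \<not> E v0 v3 \<Longrightarrow> \<not> E v0 v4 \<Longrightarrow> \<not> E v0 v5 \<Longrightarrow> \<not> E v1 v3 \<Longrightarrow> \<not> E v1 v4 \<Longrightarrow> \<not> E v1 v5 \<Longrightarrow> \<not> E v2 v4 \<Longrightarrow> \<not> E v2 v5 \<Longrightarrow> \<not> E v3 v5 \<Longrightarrow> False"
  and ban: "\<And>v0 v1 v2 v3 v4. E v0 v1 \<Longrightarrow> E v1 v2 \<Longrightarrow> E v2 v3 \<Longrightarrow> E v3 v0 \<Longrightarrow> E v0 v4 \<Longrightarrow> v0 \<noteq> v2 \<Longrightarrow> v1 \<noteq> v3 \<Longrightarrow> \<not> E v0 v2 \<Longrightarrow> \<not> E v1 v3 \<Longrightarrow> \<not> E v1 v4 \<Longrightarrow> \<not> E v2 v4 \<Longrightarrow> \<not> E v3 v4 \<Longrightarrow> False"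
  and ed1: "\<And>u v. u \<in> D \<Longrightarrow> v \<in> D \<Longrightarrow> \<not> E u v"
  and ed2: "\<And>u v w. u \<in> D \<Longrightarrow> v \<in> D \<Longrightarrow> E u w \<Longrightarrow> E v w \<Longrightarrow> u = v"
  and far_ac: "\<And>s. \<not> (E s a \<and> E s c)" and nf_ac: "\<not> E a c"
  and far_bd: "\<And>s. \<not> (E s b \<and> E s d)" and nf_bd: "\<not> E b d"
  and far_eb: "\<And>s. \<not> (E s e \<and> E s b)" and nf_eb: "\<not> E e b"
  and far_ec: "\<And>s. \<not> (E s e \<and> E s c)" and nf_ec: "\<not> E e c"
  and far_ed: "\<And>s. \<not> (E s e \<and> E s d)" and nf_ed: "\<not> E e d"
  and edges: "E a x" "E x b" "E b y" "E y c" "E c z" "E z d" "E d w" "E w a" "E a m" "E m e"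
  and cnon: "\<not> E a b" "\<not> E b c" "\<not> E c d" "\<not> E d a" "\<not> E a e"
  and dist5: "distinct [a, b, c, d, e]"
  and dom_a: "da \<in> D" "da = a \<or> E a da"
  and dom_b: "db \<in> D" "db = b \<or> E b db"
  and dom_c: "dc \<in> D" "dc = c \<or> E c dc"
  and dom_d: "dd \<in> D" "dd = d \<or> E d dd"
  shows False
proof -
  have fixed: "\<not> E a b \<and> \<not> E a y \<and> \<not> E a c \<and> \<not> E a z \<and> \<not> E a d \<and> \<not> E b c \<and> \<not> E b z \<and> \<not> E b d \<and> \<not> E b w \<and> \<not> E c x \<and> \<not> E c d \<and> \<not> E c w \<and> \<not> E d x \<and> \<not> E d y \<and> \<not> E a e \<and> a \<noteq> x \<and> a \<noteq> b \<and> a \<noteq> y \<and> a \<noteq> c \<and> a \<noteq> z \<and> a \<noteq> d \<and> a \<noteq> w \<and> a \<noteq> e \<and> a \<noteq> m \<and> x \<noteq> b \<and> x \<noteq> y \<and> x \<noteq> c \<and> x \<noteq> z \<and> x \<noteq> d \<and> x \<noteq> w \<and> x \<noteq> e \<and> x \<noteq> m \<and> b \<noteq> y \<and> b \<noteq> c \<and> b \<noteq> z \<and> b \<noteq> d \<and> b \<noteq> w \<and> b \<noteq> e \<and> b \<noteq> m \<and> y \<noteq> c \<and> y \<noteq> z \<and> y \<noteq> d \<and> y \<noteq> w \<and> y \<noteq> e \<and> y \<noteq> m \<and> c \<noteq> z \<and> c \<noteq> d \<and> c \<noteq> w \<and> c \<noteq> e \<and> c \<noteq> m \<and> z \<noteq>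 d \<and> z \<noteq> w \<and> z \<noteq> e \<and> z \<noteq> m \<and> d \<noteq> w \<and> d \<noteq> e \<and> d \<noteq> m \<and> w \<noteq> e \<and> w \<noteq> m \<and> e \<noteq> m"
    using far_ac[of a] far_ac[of x] far_ac[of b] far_ac[of y] far_ac[of c] far_ac[of z] far_ac[of d] far_ac[of w] far_ac[of e] far_ac[of m] far_bd[of a] far_bd[of x] far_bd[of b] far_bd[of y] far_bd[of c] far_bd[of z] far_bd[of d] far_bd[of w] far_bd[of e] far_bd[of m] far_eb[of a] far_eb[of x] far_eb[of b] far_eb[of y] far_eb[of c] far_eb[of z] far_eb[of d] far_eb[of w] far_eb[of e] far_eb[of m] far_ec[of a] far_ec[of x] far_ec[of b] far_ec[of y] far_ec[of c] far_ec[of z] far_ec[of d] far_ec[of w] far_ec[of e] far_ec[of m] far_ed[of a] far_ed[of x] far_ed[of b] far_ed[of y] far_ed[of c] far_ed[of z] far_ed[of d] far_ed[of w] far_ed[of e] far_ed[of m] sym irr edges cnon dist5 nf_ac nf_bd nf_eb nf_ec nf_ed by (smt (z3))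
  show False
    using far_ac[of m] far_ac[of da] far_ac[of db] far_ac[of dc] far_ac[of dd] far_bd[of da] far_bd[of db] far_bd[of dc] far_bd[of dd] far_eb[of x] far_eb[of y] far_eb[of m] far_ec[of z] far_ed[of w] far_ed[of m] ed2[of a b x] ed2[of a y x] ed2[of a z w] ed2[of a d w] ed2[of a da x] ed2[of a da w] ed2[of a db x] ed2[of a db w] ed2[of a dc x] ed2[of a dc w] ed2[of a dd x] ed2[of a dd w] ed1[of x y] ed2[of x c y] ed2[of x z y] ed2[of x d w] ed2[of x w a] ed1[of x da] ed2[of x da a] ed2[of x da y] ed2[of x da w] ed1[of x db] ed2[of x db y] ed2[of x db w] ed1[of x dc] ed2[of x dc a] ed2[of x dc y] ed2[of x dc w] ed1[of x dd] ed2[of x dd a] ed2[of x dd b] ed2[of x dd y] ed2[of x dd z] ed2[of x dd w] ed2[of b c y] ed2[of b z y] ed2[of b w x] ed2[of b m x] ed2[of b da x] ed2[of b da y] ed2[of b db x] ed2[of b db y] ed2[of b dc x] ed2[of b dc y] ed2[of b dd x] ed2[of b dd y] ed1[of y z] ed2[of y d z] ed2[of y w z] ed2[of y m x] ed2[of y da x] ed2[of y da b] ed2[of y da z] ed1[of y db] ed2[of y db x] ed2[of y db c] ed2[of y db z] ed1[of y dc] ed2[of y dc x] ed2[of y dc b] ed2[of y dc z] ed2[of y dd x] ed2[of y dd z] ed2[of c d z] ed2[of c w z] ed2[of c da y] ed2[of c da z] ed2[of c db y] ed2[of c db z] ed2[of c dc y] ed2[of c dc z] ed2[of c dd y] ed2[of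 c dd z] ed2[of z w d] ed2[of z m w] ed1[of z da] ed2[of z da y] ed2[of z da d] ed2[of z da w] ed1[of z db] ed2[of z db y] ed2[of z db c] ed2[of z db d] ed2[of z db w] ed1[of z dc] ed2[of z dc y] ed2[of z dc d] ed2[of z dc w] ed1[of z dd] ed2[of z dd y] ed2[of z dd d] ed2[of z dd w] ed2[of d m w] ed2[of d da z] ed2[of d da w] ed2[of d db z] ed2[of d db w] ed2[of d dc z] ed2[of d dc w] ed2[of d dd z] ed2[of d dd w] ed2[of w da x] ed2[of w da z] ed1[of w db] ed2[of w db a] ed2[of w db x] ed2[of w db z] ed1[of w dc] ed2[of w dc a] ed2[of w dc x] ed2[of w dc z] ed1[of w dd] ed2[of w dd x] ed2[of w dd z] ed2[of m da x] ed2[of m da w] ed2[of m db x] ed2[of m db w] ed2[of m dc x] ed2[of m dc w] ed2[of m dd x] ed2[of m dd w] ed1[of da db] ed2[of da db a] ed2[of da db x] ed2[of da db b] ed2[of da db y] ed2[of da db c] ed2[of da db z] ed2[of da db d] ed2[of da db w] ed1[of da dc] ed2[of da dc a] ed2[of da dc x] ed2[of da dc b] ed2[of da dc y] ed2[of da dc c] ed2[of da dc z] ed2[of da dc d] ed2[of da dc w] ed1[of da dd] ed2[of da dd a] ed2[of da dd x] ed2[of da dd b] ed2[of da dd y] ed2[of da dd c] ed2[of da dd z] ed2[of da dd d] ed2[of da dd w] ed1[of db dc] ed2[of db dc a] ed2[of db dc x] ed2[of db dc b] ed2[of db dc y] ed2[of db dc c] ed2[of db dc z] ed2[of db dc d]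 ed2[of db dc w] ed1[of db dd] ed2[of db dd a] ed2[of db dd x] ed2[of db dd b] ed2[of db dd y] ed2[of db dd c] ed2[of db dd z] ed2[of db dd d] ed2[of db dd w] ed1[of dc dd] ed2[of dc dd a] ed2[of dc dd x] ed2[of dc dd b] ed2[of dc dd y] ed2[of dc dd c] ed2[of dc dd z] ed2[of dc dd d] ed2[of dc dd w] p6[of a x b y z d] p6[of a x y c da d] p6[of a x y c db d] p6[of a x y c dc d] p6[of a x y c dd d] p6[of a x y z d da] p6[of a x y z d db] p6[of a x y z d dc] p6[of a x y z d dd] p6[of a x da c z d] p6[of a w z y b da] p6[of a w z y b db] p6[of a w z y b dc] p6[of a w z y b dd] p6[of a w z c y b] p6[of a w z c da b] p6[of a w z c db b] p6[of a w z c dc b] p6[of a w z c dd b] p6[of a w d z y b] p6[of a w d z c y] p6[of a m y c z d] p6[of a m z c y b] p6[of a da b y z d] p6[of a da y z d db] p6[of a da y z d dc] p6[of a da d z y b] p6[of a db b y z d] p6[of a db y z d dc] p6[of a db y z d dd] p6[of a db d z y b] p6[of a dc b y z d] p6[of a dc y z d dd] p6[of a dc d z y b] p6[of a dd b y z d] p6[of a dd y z d db] p6[of a dd y z d dc] p6[of a dd d z y b] p6[of b x w z c da] p6[of b x w z c db] p6[of b x w z c dc] p6[of b x w z c dd] p6[of b x w d da c] p6[of b x w d db c] p6[of b x w d dc c] p6[of b x w d dd c] p6[of b x da d z c] p6[of b x db c z d] p6[of b x db d z c] p6[of b x dc c z d] p6[of b x dc d z c] p6[of b x dd c z d] p6[of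 b x dd d z c] p6[of b y z w a da] p6[of b y z w a db] p6[of b y z w a dc] p6[of b y z w a dd] p6[of b da a w z c] p6[of b da w z c db] p6[of b da w z c dc] p6[of b da w z c dd] p6[of b db a w z c] p6[of b db w z c da] p6[of b db w z c dd] p6[of b dc a w z c] p6[of b dc w z c da] p6[of b dc w z c dd] p6[of b dd a w z c] p6[of c y x a w d] p6[of c y x a m e] p6[of c y x a db d] p6[of c y x a dc d] p6[of c y x a dd d] p6[of c y x w d da] p6[of c y x w d db] p6[of c y x w d dc] p6[of c y x w d dd] p6[of c y w a m e] p6[of c z w a m e] p6[of c z w x b db] p6[of c z w x b dc] p6[of c z w x b dd] p6[of c dd b x w d] p6[of z c y w m e] p6[of d z y x a da] p6[of d z y x a db] p6[of d z y x a dc] p6[of d z y x a dd] p6[of d w x y c da] p6[of d w x y c db] p6[of d w x y c dc] p6[of d w x y c dd] p6[of da a x y c db] p6[of da a x y c dc] p6[of da a x z c db] p6[of da a x z c dc] p6[of da a x z c dd] p6[of da a x z d db] p6[of da a x z d dc] p6[of da a x z d dd] p6[of da a w y b db] p6[of da a w y b dc] p6[of da a w y b dd] p6[of da a w z c db] p6[of da a w z c dd] p6[of da b x z c db] p6[of da b x z c dc] p6[of da b x z c dd] p6[of da b x z d db] p6[of da b x z d dc] p6[of da b x z d dd] p6[of da b y z d db] p6[of da b y z d dc] p6[of da b y z d dd] p6[of da b y w a db] p6[of da b y w a dc] p6[of da b y w a dd] p6[of da c y x a db] p6[of da c y x a dc] p6[of da c y x a dd] p6[of da c y w d db] p6[of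 da c y w d dc] p6[of da c y w d dd] p6[of da c z x a db] p6[of da c z x a dc] p6[of da c z x a dd] p6[of da c z x b db] p6[of da c z x b dc] p6[of da c z x b dd] p6[of da c z w a db] p6[of da c z w a dd] p6[of da d z x a db] p6[of da d z x a dc] p6[of da d z x a dd] p6[of da d z x b db] p6[of da d z x b dc] p6[of da d z x b dd] p6[of da d z y b db] p6[of da d z y b dd] p6[of da d w y c db] p6[of da d w y c dc] p6[of da d w y c dd] p6[of db a x y c dc] p6[of db a x z c dc] p6[of db a x z c dd] p6[of db a x z d dc] p6[of db a x z d dd] p6[of db a w y b dc] p6[of db a w y b dd] p6[of db a w z c dc] p6[of db a w z c dd] p6[of db b x z c dc] p6[of db b x z c dd] p6[of db b x z d dc] p6[of db b x z d dd] p6[of db b y z d dd] p6[of db b y w a dc] p6[of db b y w a dd] p6[of db c y w d dc] p6[of db c y w d dd] p6[of db c z x a dc] p6[of db c z x a dd] p6[of db c z x b dc] p6[of db c z x b dd] p6[of db c z w a dc] p6[of db c z w a dd] p6[of db d z x a dc] p6[of db d z x a dd] p6[of db d z x b dc] p6[of db d z x b dd] p6[of db d z y b dc] p6[of db d z y b dd] p6[of db d w y c dc] p6[of db d w y c dd] p6[of dc a x z c dd] p6[of dc a x z d dd] p6[of dc a w y b dd] p6[of dc a w z c dd] p6[of dc b x z c dd] p6[of dc b x z d dd] p6[of dc b y z d dd] p6[of dc b y w a dd] p6[of dc c y x a dd] p6[of dc c y w d dd] p6[of dc c z x a dd] p6[of dc c z x b dd] p6[of dc c z w a dd] p6[of dc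 d z x a dd] p6[of dc d z x b dd] p6[of dc d z y b dd] p6[of dc d w y c dd] ban[of x a da z b] ban[of x b y z a] ban[of x y c db a] ban[of x y c dc a] ban[of x y c dd a] ban[of x z c da b] ban[of x z c db b] ban[of x z c dc a] ban[of x z d da a] ban[of x z d db b] ban[of x z d dc b] ban[of x z d dd b] ban[of x w d da b] ban[of x w d db b] ban[of x w d dc b] ban[of x w d dd b] ban[of y x a w c] ban[of y x a m c] ban[of y x a da c] ban[of y x a db c] ban[of y x a dc c] ban[of y x a dd c] ban[of y c z w b] ban[of y z d w b] ban[of y z d da b] ban[of y z d db b] ban[of y z d dc b] ban[of y z d dd b] ban[of z x a db c] ban[of z x a dc c] ban[of z x a dd c] ban[of z x b da d] ban[of z x b db d] ban[of z x b dc d] ban[of z x b dd d] ban[of z x dd c d] ban[of z y b da d] ban[of z y b db d] ban[of z y b dc d] ban[of z y b dd d] ban[of z c da d x] ban[of z c dc d x] ban[of z c dd d x] ban[of z w a m c] ban[of z w a da c] ban[of z w a db c] ban[of z w a dc c] ban[of z w a dd c] ban[of w x b db d] ban[of w x b dc d] ban[of w x b dd d] ban[of w y b dd d] ban[of w z c da a] ban[of w z c db a] ban[of w z c dc a] ban[of w z c dd a] ban[of m y c z a] ban[of da x y c d]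
      sym fixed edges nf_ac nf_bd nf_eb nf_ec nf_ed dom_a dom_b dom_c dom_d
    by (smt (z3))
qed

lemma k_ab1:
  fixes E :: "'a \<Rightarrow> 'a \<Rightarrow> bool" and D :: "'a set"
  assumes sym: "\<And>u v. E u v \<Longrightarrow> E v u" and irr: "\<And>u. \<not> E u u"
  and p6: "\<And>v0 v1 v2 v3 v4 v5. E v0 v1 \<Longrightarrow> E v1 v2 \<Longrightarrow> E v2 v3 \<Longrightarrow> E v3 v4 \<Longrightarrow> E v4 v5 \<Longrightarrow> \<not> E v0 v2 \<Longrightarrow> \<not> E v0 v3 \<Longrightarrow> \<not> E v0 v4 \<Longrightarrow> \<not> E v0 v5 \<Longrightarrow> \<not> E v1 v3 \<Longrightarrow> \<not> E v1 v4 \<Longrightarrow> \<not> E v1 v5 \<Longrightarrow> \<not> E v2 v4 \<Longrightarrow> \<not> E v2 v5 \<Longrightarrow> \<not> E v3 v5 \<Longrightarrow> False"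
  and ban: "\<And>v0 v1 v2 v3 v4. E v0 v1 \<Longrightarrow> E v1 v2 \<Longrightarrow> E v2 v3 \<Longrightarrow> E v3 v0 \<Longrightarrow> E v0 v4 \<Longrightarrow> v0 \<noteq> v2 \<Longrightarrow> v1 \<noteq> v3 \<Longrightarrow> \<not> E v0 v2 \<Longrightarrow> \<not> E v1 v3 \<Longrightarrow> \<not> E v1 v4 \<Longrightarrow> \<not> E v2 v4 \<Longrightarrow> \<not> E v3 v4 \<Longrightarrow> False"
  and far_ac: "\<And>s. \<not> (E s a \<and> E s c)" and nf_ac: "\<not> E a c"
  and far_bd: "\<And>s. \<not> (E s b \<and> E s d)" and nf_bd: "\<not> E b d"
  and edges: "E a b" "E b y" "E y c" "E c z" "E z d" "E d w" "E w a"
  and cnon: "\<not> E b c" "\<not> E c d" "\<not> E d a"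
  and dist5: "distinct [a, b, c, d]"
  shows False
proof -
  have fixed: "\<not> E a y \<and> \<not> E a c \<and> \<not> E a z \<and> \<not> E a d \<and> \<not> E b c \<and> \<not> E b z \<and> \<not> E b d \<and> \<not> E b w \<and> \<not> E c d \<and> \<not> E c w \<and> \<not> E d y \<and> a \<noteq> b \<and> a \<noteq> y \<and> a \<noteq> c \<and> a \<noteq> z \<and> a \<noteq> d \<and> a \<noteq> w \<and> b \<noteq> y \<and> b \<noteq> c \<and> b \<noteq> z \<and> b \<noteq> d \<and> b \<noteq> w \<and> y \<noteq> c \<and> y \<noteq> z \<and> y \<noteq> d \<and> y \<noteq> w \<and> c \<noteq> z \<and> c \<noteq> d \<and> c \<noteq> w \<and> z \<noteq> d \<and> z \<noteq> w \<and> d \<noteq> w"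
    using far_ac[of a] far_ac[of b] far_ac[of y] far_ac[of c] far_ac[of z] far_ac[of d] far_ac[of w] far_bd[of a] far_bd[of b] far_bd[of y] far_bd[of c] far_bd[of z] far_bd[of d] far_bd[of w] sym irr edges cnon dist5 nf_ac nf_bd by (smt (z3))
  show False
    using p6[of c y b a w d] ban[of y b a w c]
      sym fixed edges nf_ac nf_bd 
    by (smt (z3))
qed

lemma k_bc1:
  fixes E :: "'a \<Rightarrow> 'a \<Rightarrow> bool" and D :: "'a set"
  assumes sym: "\<And>u v. E u v \<Longrightarrow> E v u" and irr: "\<And>u. \<not> E u u"
  and p6: "\<And>v0 v1 v2 v3 v4 v5. E v0 v1 \<Longrightarrow> E v1 v2 \<Longrightarrow> E v2 v3 \<Longrightarrow> E v3 v4 \<Longrightarrow> E v4 v5 \<Longrightarrow> \<not> E v0 v2 \<Longrightarrow> \<not> E v0 v3 \<Longrightarrow> \<not> E v0 v4 \<Longrightarrow> \<not> E v0 v5 \<Longrightarrow> \<not> E v1 v3 \<Longrightarrow> \<not> E v1 v4 \<Longrightarrow> \<not> E v1 v5 \<Longrightarrow> \<not> E v2 v4 \<Longrightarrow> \<not> E v2 v5 \<Longrightarrow> \<not> E v3 v5 \<Longrightarrow> False"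
  and ban: "\<And>v0 v1 v2 v3 v4. E v0 v1 \<Longrightarrow> E v1 v2 \<Longrightarrow> E v2 v3 \<Longrightarrow> E v3 v0 \<Longrightarrow> E v0 v4 \<Longrightarrow> v0 \<noteq> v2 \<Longrightarrow> v1 \<noteq> v3 \<Longrightarrow> \<not> E v0 v2 \<Longrightarrow> \<not> E v1 v3 \<Longrightarrow> \<not> E v1 v4 \<Longrightarrow> \<not> E v2 v4 \<Longrightarrow> \<not> E v3 v4 \<Longrightarrow> False"
  and far_ac: "\<And>s. \<not> (E s a \<and> E s c)" and nf_ac: "\<not> E a c"
  and far_bd: "\<And>s. \<not> (E s b \<and> E s d)" and nf_bd: "\<not> E b d"
  and edges: "E a x" "E x b" "E b c" "E c z" "E z d" "E d w" "E w a"
  and cnon: "\<not> E a b" "\<not> E c d" "\<not> E d a"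
  and dist5: "distinct [a, b, c, d]"
  shows False
proof -
  have fixed: "\<not> E a b \<and> \<not> E a c \<and> \<not> E a z \<and> \<not> E a d \<and> \<not> E b z \<and> \<not> E b d \<and> \<not> E b w \<and> \<not> E c x \<and> \<not> E c d \<and> \<not> E c w \<and> \<not> E d x \<and> a \<noteq> x \<and> a \<noteq> b \<and> a \<noteq> c \<and> a \<noteq> z \<and> a \<noteq> d \<and> a \<noteq> w \<and> x \<noteq> b \<and> x \<noteq> c \<and> x \<noteq> z \<and> x \<noteq> d \<and> x \<noteq> w \<and> b \<noteq> c \<and> b \<noteq> z \<and> b \<noteq> d \<and> b \<noteq> w \<and> c \<noteq> z \<and> c \<noteq> d \<and> c \<noteq> w \<and> z \<noteq> d \<and> z \<noteq> w \<and> d \<noteq> w"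
    using far_ac[of a] far_ac[of x] far_ac[of b] far_ac[of c] far_ac[of z] far_ac[of d] far_ac[of w] far_bd[of a] far_bd[of x] far_bd[of b] far_bd[of c] far_bd[of z] far_bd[of d] far_bd[of w] sym irr edges cnon dist5 nf_ac nf_bd by (smt (z3))
  show False
    using p6[of a x b c z d] ban[of x b c z a]
      sym fixed edges nf_ac nf_bd 
    by (smt (z3))
qed

lemma k_ab1cd1:
  fixes E :: "'a \<Rightarrow> 'a \<Rightarrow> bool" and D :: "'a set"
  assumes sym: "\<And>u v. E u v \<Longrightarrow> E v u" and irr: "\<And>u. \<not> E u u"
  and p6: "\<And>v0 v1 v2 v3 v4 v5. E v0 v1 \<Longrightarrow> E v1 v2 \<Longrightarrow> E v2 v3 \<Longrightarrow> E v3 v4 \<Longrightarrow> E v4 v5 \<Longrightarrow> \<not> E v0 v2 \<Longrightarrow> \<not> E v0 v3 \<Longrightarrow> \<not> E v0 v4 \<Longrightarrow> \<not> E v0 v5 \<Longrightarrow> \<not> E v1 v3 \<Longrightarrow> \<not> E v1 v4 \<Longrightarrow> \<not> E v1 v5 \<Longrightarrow> \<not> E v2 v4 \<Longrightarrow> \<not> E v2 v5 \<Longrightarrow> \<not> E v3 v5 \<Longrightarrow> False"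
  and ban: "\<And>v0 v1 v2 v3 v4. E v0 v1 \<Longrightarrow> E v1 v2 \<Longrightarrow> E v2 v3 \<Longrightarrow> E v3 v0 \<Longrightarrow> E v0 v4 \<Longrightarrow> v0 \<noteq> v2 \<Longrightarrow> v1 \<noteq> v3 \<Longrightarrow> \<not> E v0 v2 \<Longrightarrow> \<not> E v1 v3 \<Longrightarrow> \<not> E v1 v4 \<Longrightarrow> \<not> E v2 v4 \<Longrightarrow> \<not> E v3 v4 \<Longrightarrow> False"
  and far_ac: "\<And>s. \<not> (E s a \<and> E s c)" and nf_ac: "\<not> E a c"
  and far_bd: "\<And>s. \<not> (E s b \<and> E s d)" and nf_bd: "\<not> E b d"
  and far_eb: "\<And>s. \<not> (E s e \<and> E s b)" and nf_eb: "\<not> E e b"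
  and far_ec: "\<And>s. \<not> (E s e \<and> E s c)" and nf_ec: "\<not> E e c"
  and far_ed: "\<And>s. \<not> (E s e \<and> E s d)" and nf_ed: "\<not> E e d"
  and edges: "E a b" "E b y" "E y c" "E c d" "E d w" "E w a" "E a m" "E m e"
  and cnon: "\<not> E b c" "\<not> E d a" "\<not> E a e"
  and dist5: "distinct [a, b, c, d, e]"
  shows False
proof -
  have fixed: "\<not> E a y \<and> \<not> E a c \<and> \<not> E a d \<and> \<not> E b c \<and> \<not> E b d \<and> \<not> E b w \<and> \<not> E c w \<and> \<not> E d y \<and> \<not> E a e \<and> a \<noteq> b \<and> a \<noteq> y \<and> a \<noteq> c \<and> a \<noteq> d \<and> a \<noteq> w \<and> a \<noteq> e \<and> a \<noteq> m \<and> b \<noteq> y \<and> b \<noteq> c \<and> b \<noteq> d \<and> b \<noteq> w \<and> b \<noteq> e \<and> b \<noteq> m \<and> y \<noteq> c \<and> y \<noteq> d \<and> y \<noteq> w \<and> y \<noteq> e \<and> y \<noteq> m \<and> c \<noteq> d \<and> c \<noteq> w \<and> c \<noteq> e \<and> c \<noteq> m \<and> d \<noteq> w \<and> d \<noteq> e \<and> d \<noteq> m \<and> w \<noteq> e \<and> w \<noteq> m \<and> e \<noteq> m"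
    using far_ac[of a] far_ac[of b] far_ac[of y] far_ac[of c] far_ac[of d] far_ac[of w] far_ac[of e] far_ac[of m] far_bd[of a] far_bd[of b] far_bd[of y] far_bd[of c] far_bd[of d] far_bd[of w] far_bd[of e] far_bd[of m] far_eb[of a] far_eb[of b] far_eb[of y] far_eb[of c] far_eb[of d] far_eb[of w] far_eb[of e] far_eb[of m] far_ec[of a] far_ec[of b] far_ec[of y] far_ec[of c] far_ec[of d] far_ec[of w] far_ec[of e] far_ec[of m] far_ed[of a] far_ed[of b] far_ed[of y] far_ed[of c] far_ed[of d] far_ed[of w] far_ed[of e] far_ed[of m] sym irr edges cnon dist5 nf_ac nf_bd nf_eb nf_ec nf_ed by (smt (z3))
  show False
    using far_ac[of m] far_eb[of y] far_eb[of m] p6[of c y b a m e] ban[of y b a m c]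
      sym fixed edges nf_ac nf_bd nf_eb nf_ec nf_ed 
    by (smt (z3))
qed


theorem theorem2:
  fixes V :: "'a set" and E :: "'a \<Rightarrow> 'a \<Rightarrow> bool"
  assumes "simple_graph V E"
    and "P_free 6 V E"
    and "banner_free V E"
    and "\<exists>D. efficient_dominating_set V E D"
  shows "banner_free V (square_edges V E)"
proof (rule ccontr)
  assume nb: "\<not> banner_free V (square_edges V E)"
  have G: "simple_graph V E" by fact
  have sym: "\<And>u v. E u v \<Longrightarrow> E v u" and irr: "\<And>u. \<not> E u u" and inV: "\<And>u v. E u v \<Longrightarrow> u \<in> V \<and> v \<in> V"
    using G unfolding simple_graph_def by auto
  have p6: "\<And>v0 v1 v2 v3 v4 v5. E v0 v1 \<Longrightarrow> E v1 v2 \<Longrightarrow> E v2 v3 \<Longrightarrow> E v3 v4 \<Longrightarrow> E v4 v5 \<Longrightarrow> \<not> E v0 v2 \<Longrightarrow> \<not> E v0 v3 \<Longrightarrow> \<not> E v0 v4 \<Longrightarrow> \<not> E v0 v5 \<Longrightarrow> \<not> E v1 v3 \<Longrightarrow> \<not> E v1 v4 \<Longrightarrow> \<not> E v1 v5 \<Longrightarrow> \<not> E v2 v4 \<Longrightarrow> \<not> E v2 v5 \<Longrightarrow> \<not> E v3 v5 \<Longrightarrow> False"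
    by (rule p6_lemma[OF assms(1,2)])
  have ban: "\<And>v0 v1 v2 v3 v4. E v0 v1 \<Longrightarrow> E v1 v2 \<Longrightarrow> E v2 v3 \<Longrightarrow> E v3 v0 \<Longrightarrow> E v0 v4 \<Longrightarrow> v0 \<noteq> v2 \<Longrightarrow> v1 \<noteq> v3 \<Longrightarrow> \<not> E v0 v2 \<Longrightarrow> \<not> E v1 v3 \<Longrightarrow> \<not> E v1 v4 \<Longrightarrow> \<not> E v2 v4 \<Longrightarrow> \<not> E v3 v4 \<Longrightarrow> False"
    by (rule ban_lemma[OF assms(1,3)])
  have nsym: "\<And>u v. \<not> E u v \<Longrightarrow> \<not> E v u" using sym by blast
  obtain D where ED: "efficient_dominating_set V E D" using assms(4) by blast
  have ed1: "\<And>u v. u \<in> D \<Longrightarrow> v \<in> D \<Longrightarrow> \<not> E u v"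
    using ED unfolding efficient_dominating_set_def by blast
  have ed2: "\<And>u v w. u \<in> D \<Longrightarrow> v \<in> D \<Longrightarrow> E u w \<Longrightarrow> E v w \<Longrightarrow> u = v"
  proof -
    fix u v w assume h: "u \<in> D" "v \<in> D" "E u w" "E v w"
    have "w \<in> V" using inV h(3) by blast
    moreover have "w \<notin> D" using ed1 h by blast
    ultimately have "\<exists>!d. d \<in> D \<and> E w d" using ED unfolding efficient_dominating_set_def by blast
    then show "u = v" using h sym by blast
  qed
  have dom: "\<And>v. v \<in> V \<Longrightarrow> \<exists>dv. dv \<in> D \<and> (dv = v \<or> E v dv)"
    using ED unfolding efficient_dominating_set_def by blast
  obtain f where inj: "inj_on f {0..<5}" and fV: "f ` {0..<5} \<subseteq> V"
    and fE: "\<forall>x\<in>{0..<5}. \<forall>y\<in>{0..<5}. square_edges V E (f x) (f y) \<longleftrightarrow> banner_edges x y"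
    using nb unfolding banner_free_def has_induced_def by blast
  define a where "a = f 0"
  define b where "b = f 1"
  define c where "c = f 2"
  define d where "d = f 3"
  define e where "e = f 4"
  have inV5: "a \<in> V" "b \<in> V" "c \<in> V" "d \<in> V" "e \<in> V"
    using fV unfolding a_def b_def c_def d_def e_def by auto
  have dist5: "distinct [a,b,c,d,e]"
    using inj unfolding a_def b_def c_def d_def e_def inj_on_def by (auto simp: lt5)
  have sqf: "square_edges V E a b" "square_edges V E b c" "square_edges V E c d" "square_edges V E d a" "square_edges V E a e"
    "\<not> square_edges V E a c" "\<not> square_edges V E b d" "\<not> square_edges V E b e" "\<not> square_edges V E c e" "\<not> square_edges V E d e"
    using fE banner_vals unfolding a_def b_def c_def d_def e_def lt5 by auto
  note sqi = sq_iff[OF G]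
  have Nab: "E a b \<or> (\<exists>w. E a w \<and> E w b)" using sqf(1) sqi by blast
  have Nbc: "E b c \<or> (\<exists>w. E b w \<and> E w c)" using sqf(2) sqi by blast
  have Ncd: "E c d \<or> (\<exists>w. E c w \<and> E w d)" using sqf(3) sqi by blast
  have Nda: "E d a \<or> (\<exists>w. E d w \<and> E w a)" using sqf(4) sqi by blast
  have Nae: "E a e \<or> (\<exists>w. E a w \<and> E w e)" using sqf(5) sqi by blast
  have F: "\<not> E a c" "\<not> E b d" "\<not> E b e" "\<not> E c e" "\<not> E d e"
    "\<And>w. \<not> (E a w \<and> E w c)" "\<And>w. \<not> (E b w \<and> E w d)" "\<And>w. \<not> (E b w \<and> E w e)"
    "\<And>w. \<not> (E c w \<and> E w e)" "\<And>w. \<not> (E d w \<and> E w e)"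
    using sqf(6-10) sqi inV5 dist5 by auto
  have far_ac: "\<And>s. \<not> (E s a \<and> E s c)" and far_ca: "\<And>s. \<not> (E s c \<and> E s a)" using F(6) sym by blast+
  have far_bd: "\<And>s. \<not> (E s b \<and> E s d)" and far_db: "\<And>s. \<not> (E s d \<and> E s b)" using F(7) sym by blast+
  have far_eb: "\<And>s. \<not> (E s e \<and> E s b)" using F(8) sym by blast
  have far_ec: "\<And>s. \<not> (E s e \<and> E s c)" using F(9) sym by blast
  have far_ed: "\<And>s. \<not> (E s e \<and> E s d)" using F(10) sym by blast
  have nf: "\<not> E a c" "\<not> E c a" "\<not> E b d" "\<not> E d b" "\<not> E e b" "\<not> E e c" "\<not> E e d"
    using F(1-5) sym by blast+
  obtain da where da: "da \<in> D" "da = a \<or> E a da" using dom inV5 by blast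
  obtain db where db: "db \<in> D" "db = b \<or> E b db" using dom inV5 by blast
  obtain dc where dc: "dc \<in> D" "dc = c \<or> E c dc" using dom inV5 by blast
  obtain dd where dd: "dd \<in> D" "dd = d \<or> E d dd" using dom inV5 by blast
  have dist4: "distinct [a,b,c,d]" "distinct [a,d,c,b]" "distinct [a,d,c,b,e]" using dist5 by auto
  note K = sym irr p6 ban ed1 ed2 far_ac far_ca far_bd far_db far_eb far_ec far_ed nf dist5 dist4 da db dc dd
  show False
  proof (cases "E a e")
    case ae: True
    have nab: "\<not> E a b" using far_eb[of a] ae by blast
    have nad: "\<not> E a d" using far_ed[of a] ae by blast
    obtain x where x: "E a x" "E x b" using Nab nab by blast
    obtain w where w: "E d w" "E w a" using Nda nad sym by blast
    show False
    proof (cases "E b c")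
      case bc: True
      have ncd: "\<not> E c d" using far_bd[of c] bc sym by blast
      obtain z where z: "E c z" "E z d" using Ncd ncd by blast
      show False
        by (rule k_bc1[where E=E and a=a and x=x and b=b and c=c and z=z and d=d and w=w])
          (fact | (rule sym, fact) | (rule nsym, fact))+
    next
      case nbc: False
      obtain y where y: "E b y" "E y c" using Nbc nbc by blast
      show False
      proof (cases "E c d")
        case cd: True
        show False
          by (rule k_bc1[where E=E and a=a and x=w and b=d and c=c and z=y and d=b and w=x])
            (fact | (rule sym, fact) | (rule nsym, fact))+
      next
        case ncd: False
        obtain z where z: "E c z" "E z d" using Ncd ncd by blast
        show False
          by (rule k_all2_1[where E=E and D=D and a=a and x=x and b=b and y=y and c=c and z=z and d=d and w=w and e=e and db=db and dc=dc and dd=dd])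
            (fact | (rule sym, fact) | (rule nsym, fact))+
      qed
    qed
  next
    case nae: False
    obtain m where m: "E a m" "E m e" using Nae nae by blast
    show False
    proof (cases "E a b")
      case ab: True
      have nad: "\<not> E a d" using far_bd[of a] ab by blast
      have nbc: "\<not> E b c" using far_ac[of b] ab sym by blast
      obtain w where w: "E d w" "E w a" using Nda nad sym by blast
      obtain y where y: "E b y" "E y c" using Nbc nbc by blast
      show False
      proof (cases "E c d")
        case cd: True
        show False
          by (rule k_ab1cd1[where E=E and a=a and b=b and y=y and c=c and d=d and w=w and e=e and m=m])
            (fact | (rule sym, fact) | (rule nsym, fact))+
      next
        case ncd: False
        obtain z where z: "E c z" "E z d" using Ncd ncd by blast
        show False
          by (rule k_ab1[where E=E and a=a and b=b and y=y and c=c and z=z and d=d and w=w])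
            (fact | (rule sym, fact) | (rule nsym, fact))+
      qed
    next
      case nab: False
      obtain x where x: "E a x" "E x b" using Nab nab by blast
      show False
      proof (cases "E a d")
        case ad: True
        have ncd: "\<not> E c d" using far_ac[of d] ad sym by blast
        obtain z where z: "E c z" "E z d" using Ncd ncd by blast
        show False
        proof (cases "E b c")
          case bc: True
          show False
            by (rule k_ab1cd1[where E=E and a=a and b=d and y=z and c=c and d=b and w=x and e=e and m=m])
              (fact | (rule sym, fact) | (rule nsym, fact))+
        next
          case nbc: False
          obtain y where y: "E b y" "E y c" using Nbc nbc by blast
          show False
            by (rule k_ab1[where E=E and a=a and b=d and y=z and c=c and z=y and d=b and w=x])
              (fact | (rule sym, fact) | (rule nsym, fact))+
        qed
      next
        case nad: False
        obtain w where w: "E d w" "E w a" using Nda nad sym by blast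
        show False
        proof (cases "E b c")
          case bc: True
          have ncd: "\<not> E c d" using far_bd[of c] bc sym by blast
          obtain z where z: "E c z" "E z d" using Ncd ncd by blast
          show False
            by (rule k_bc1[where E=E and a=a and x=x and b=b and c=c and z=z and d=d and w=w])
              (fact | (rule sym, fact) | (rule nsym, fact))+
        next
          case nbc: False
          obtain y where y: "E b y" "E y c" using Nbc nbc by blast
          show False
          proof (cases "E c d")
            case cd: True
            show False
              by (rule k_bc1[where E=E and a=a and x=w and b=d and c=c and z=y and d=b and w=x])
                (fact | (rule sym, fact) | (rule nsym, fact))+
          next
            case ncd: False
            obtain z where z: "E c z" "E z d" using Ncd ncd by blast
            show False
              by (rule k_all2_2[where E=E and D=D and a=a and x=x and b=b and y=y and c=c and z=z and d=d and w=w and e=e and m=m and da=da and db=db and dc=dc and dd=dd])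
                (fact | (rule sym, fact) | (rule nsym, fact))+
          qed
        qed
      qed
    qed
  qed
qed

end
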